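(* Let $G=(V,E)$ be a finite graph with boundary $B\subseteq V$, $|B|\ge2$, with maximum degree $\Delta\ge3$, and let $t\ge1$ be an integer such that the boundary diameter satisfies $D_B\ge 2t+2$ (in particular $D_B\ge4$). Let $q=\Delta-1$. Then $$\sigma_2(G,B)\le\frac{(q+1)(q^{t+1}-q^t+1)}{q^{t+1}}=q-\frac{q^t-q-1}{q^{t+1}}.$$ Moreover, the right-hand side is monotone decreasing in $t$.
   Context: A boundary is $B\subseteq V$ with $|B|\ge2$. The boundary diameter $D_B$ is $\max_{x,y\in B}\operatorname{dist}_G(x,y)$, with $\operatorname{dist}_G$ the graph distance in $G$. Rayleigh quotient: $R(f)=\frac{\sum_{\{x,y\}\in E}(f(x)-f(y))^2}{\sum_{x\in B}f(x)^2}$ ($+\infty$ if $f|_B=0$); $\sigma_2(G,B)=\min_{W\subseteq\mathbb{R}^V,\dim W=2}\max_{0\ne f\in W}R(f)$. *)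

theory Defs
  imports "HOL-Analysis.Analysis" "HOL-Library.Extended_Nat"
begin

text \<open>A finite simple graph: vertex set = the finite type 'n (V = UNIV),
  edges given by a symmetric irreflexive adjacency relation adj.
  Functions f : V \<rightarrow> R are vectors of type real ^ 'n.\<close>

definition simple_graph :: "('n::finite \<Rightarrow> 'n \<Rightarrow> bool) \<Rightarrow> bool" where
  "simple_graph adj \<longleftrightarrow> (\<forall>x y. adj x y \<longrightarrow> adj y x) \<and> (\<forall>x. \<not> adj x x)"

definition degree :: "('n::finite \<Rightarrow> 'n \<Rightarrow> bool) \<Rightarrow> 'n \<Rightarrow> nat" where
  "degree adj x = card {y. adj x y}"

definition max_degree :: "('n::finite \<Rightarrow> 'n \<Rightarrow> bool) \<Rightarrow> nat" where
  "max_degree adj = Max (range (degree adj))"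

definition walk :: "('n \<Rightarrow> 'n \<Rightarrow> bool) \<Rightarrow> 'n \<Rightarrow> 'n \<Rightarrow> nat \<Rightarrow> bool" where
  "walk adj x y n \<longleftrightarrow> (\<exists>p. length p = Suc n \<and> p ! 0 = x \<and> p ! n = y \<and>
      (\<forall>i<n. adj (p ! i) (p ! Suc i)))"

text \<open>Graph distance (infinite if x and y lie in different components).\<close>
definition gdist :: "('n \<Rightarrow> 'n \<Rightarrow> bool) \<Rightarrow> 'n \<Rightarrow> 'n \<Rightarrow> enat" where
  "gdist adj x y = (INF n \<in> {n. walk adj x y n}. enat n)"

definition boundary_diameter :: "('n \<Rightarrow> 'n \<Rightarrow> bool) \<Rightarrow> 'n set \<Rightarrow> enat" where
  "boundary_diameter adj B = (SUP p \<in> B \<times> B. gdist adj (fst p) (snd p))"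

text \<open>Dirichlet energy: sum over undirected edges {x,y}; each edge appears twice
  as an ordered pair, hence the factor 1/2.\<close>
definition energy :: "('n::finite \<Rightarrow> 'n \<Rightarrow> bool) \<Rightarrow> real ^ 'n \<Rightarrow> real" where
  "energy adj f = (\<Sum>(x,y) \<in> {(x,y). adj x y}. (f $ x - f $ y)\<^sup>2) / 2"

definition rayleigh :: "('n::finite \<Rightarrow> 'n \<Rightarrow> bool) \<Rightarrow> 'n set \<Rightarrow> real ^ 'n \<Rightarrow> ereal" where
  "rayleigh adj B f =
     (if (\<forall>x\<in>B. f $ x = 0) then \<infinity>
      else ereal (energy adj f / (\<Sum>x\<in>B. (f $ x)\<^sup>2)))"

definition sigma2 :: "('n::finite \<Rightarrow> 'n \<Rightarrow> bool) \<Rightarrow> 'n set \<Rightarrow> ereal" where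
  "sigma2 adj B = (INF W \<in> {W :: (real ^ 'n) set. subspace W \<and> dim W = 2}.
                      (SUP f \<in> W - {0}. rayleigh adj B f))"

definition steklov_bound :: "real \<Rightarrow> nat \<Rightarrow> real" where
  "steklov_bound q t = (q + 1) * (q ^ (t + 1) - q ^ t + 1) / q ^ (t + 1)"

end

theory Submission
  imports Defs
begin

lemma walk_0: "walk adj x y 0 \<longleftrightarrow> x = y"
  unfolding walk_def
  apply auto
  by (rule exI[of _ "[y]"]) simp

lemma walk_Suc: "walk adj x y (Suc n) \<longleftrightarrow> (\<exists>u. walk adj x u n \<and> adj u y)"
proof
  assume "walk adj x y (Suc n)"
  then obtain p where p: "length p = Suc (Suc n)" "p!0 = x" "p!Suc n = y"
     "\<forall>i<Suc n. adj (p!i) (p!Suc i)" unfolding walk_def by blast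
  have "walk adj x (p!n) n" unfolding walk_def
    apply (rule exI[of _ "take (Suc n) p"]) using p by auto
  moreover have "adj (p!n) y" using p by auto
  ultimately show "\<exists>u. walk adj x u n \<and> adj u y" by blast
next
  assume "\<exists>u. walk adj x u n \<and> adj u y"
  then obtain u p where p: "length p = Suc n" "p!0 = x" "p!n = u"
     "\<forall>i<n. adj (p!i) (p!Suc i)" "adj u y" unfolding walk_def by blast
  show "walk adj x y (Suc n)" unfolding walk_def
  proof (rule exI[of _ "p @ [y]"], intro conjI allI impI)
    fix i assume "i < Suc n"
    then consider "i < n" | "i = n" by linarith
    then show "adj ((p @ [y]) ! i) ((p @ [y]) ! Suc i)"
      by cases (use p in \<open>auto simp: nth_append\<close>)
  qed (use p in \<open>auto simp: nth_append\<close>)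
qed

lemma walk_trans: "walk adj x u m \<Longrightarrow> walk adj u y n \<Longrightarrow> walk adj x y (m+n)"
  by (induction n arbitrary: y) (auto simp: walk_0 walk_Suc)

lemma walk_sym: "simple_graph adj \<Longrightarrow> walk adj x y n \<Longrightarrow> walk adj y x n"
proof (induction n arbitrary: y)
  case 0 then show ?case by (simp add: walk_0)
next
  case (Suc n)
  then obtain u where u: "walk adj x u n" "adj u y" by (auto simp: walk_Suc)
  have "walk adj u x n" using Suc u by blast
  moreover have "walk adj y u 1" using u Suc.prems(1)
    by (auto simp: walk_Suc walk_0 simple_graph_def)
  ultimately show ?case using walk_trans by fastforce
qed


definition conn :: "('n \<Rightarrow> 'n \<Rightarrow> bool) \<Rightarrow> 'n \<Rightarrow> 'n \<Rightarrow> bool" where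
  "conn adj x v \<longleftrightarrow> (\<exists>n. walk adj x v n)"
definition dd :: "('n \<Rightarrow> 'n \<Rightarrow> bool) \<Rightarrow> 'n \<Rightarrow> 'n \<Rightarrow> nat" where
  "dd adj x v = (LEAST n. walk adj x v n)"

lemma walk_dd: "conn adj x v \<Longrightarrow> walk adj x v (dd adj x v)"
  unfolding conn_def dd_def by (metis LeastI)
lemma dd_le: "walk adj x v m \<Longrightarrow> dd adj x v \<le> m"
  unfolding dd_def by (rule Least_le)
lemma conn_I: "walk adj x v m \<Longrightarrow> conn adj x v"
  unfolding conn_def by blast
lemma conn_self: "conn adj x x" and dd_self: "dd adj x x = 0"
  using dd_le[of adj x x 0] conn_I[of adj x x 0] by (auto simp: walk_0)
lemma dd_0: "conn adj x u \<Longrightarrow> dd adj x u = 0 \<Longrightarrow> u = x"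
  using walk_dd[of adj x u] by (auto simp: walk_0)
lemma adj_step: "adj u v \<Longrightarrow> conn adj x u \<Longrightarrow> conn adj x v \<and> dd adj x v \<le> Suc (dd adj x u)"
proof -
  assume a: "adj u v" "conn adj x u"
  then have w: "walk adj x v (Suc (dd adj x u))" using walk_dd[of adj x u] by (auto simp: walk_Suc)
  show ?thesis using conn_I[OF w] dd_le[OF w] by (rule conjI)
qed
lemma pred_ex: "conn adj x v \<Longrightarrow> dd adj x v = Suc k \<Longrightarrow> \<exists>p. adj p v \<and> conn adj x p \<and> dd adj x p = k"
proof -
  assume a: "conn adj x v" "dd adj x v = Suc k"
  then have "walk adj x v (Suc k)" using walk_dd by metis
  then obtain p where p: "walk adj x p k" "adj p v" by (auto simp: walk_Suc)
  then have "conn adj x p" "dd adj x p \<le> k" using conn_I[OF p(1)] dd_le[OF p(1)] by auto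
  moreover have "dd adj x v \<le> Suc (dd adj x p)" using adj_step[OF p(2) calculation(1)] by simp
  ultimately have "dd adj x p = k" using a(2) by linarith
  then show ?thesis using p(2) \<open>conn adj x p\<close> by blast
qed

lemma deg_le: "degree adj u \<le> max_degree adj"
  unfolding max_degree_def by (rule Max_ge) auto

definition gfun :: "real \<Rightarrow> nat \<Rightarrow> nat \<Rightarrow> real" where
  "gfun q t k = (if k \<le> t then (1/q)^k else 0)"
definition tf :: "('n \<Rightarrow> 'n \<Rightarrow> bool) \<Rightarrow> 'n \<Rightarrow> real \<Rightarrow> nat \<Rightarrow> 'n \<Rightarrow> real" where
  "tf adj x q t v = (if conn adj x v then gfun q t (dd adj x v) else 0)"
definition Ek :: "('n \<Rightarrow> 'n \<Rightarrow> bool) \<Rightarrow> 'n \<Rightarrow> nat \<Rightarrow> ('n \<times> 'n) set" where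
  "Ek adj x k = {(u,v). adj u v \<and> conn adj x u \<and> dd adj x v = Suc (dd adj x u) \<and> dd adj x u = k}"
definition wk :: "real \<Rightarrow> nat \<Rightarrow> nat \<Rightarrow> real" where
  "wk q t k = (gfun q t k - gfun q t (Suc k))^2"
definition psi :: "('n \<Rightarrow> 'n \<Rightarrow> bool) \<Rightarrow> 'n \<Rightarrow> real \<Rightarrow> nat \<Rightarrow> 'n \<times> 'n \<Rightarrow> real" where
  "psi adj x q t p = (\<Sum>k\<le>t. if p \<in> Ek adj x k then wk q t k else 0)"

lemma psi_nonneg: "psi adj x q t p \<ge> 0"
  unfolding psi_def wk_def by (auto intro: sum_nonneg)

lemma wk_big: "k > t \<Longrightarrow> wk q t k = 0"
  unfolding wk_def gfun_def by auto

lemma psi_eval: "adj u v \<Longrightarrow> conn adj x u \<Longrightarrow> dd adj x v = Suc (dd adj x u) \<Longrightarrow>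
   psi adj x q t (u,v) = wk q t (dd adj x u)"
proof -
  assume a: "adj u v" "conn adj x u" "dd adj x v = Suc (dd adj x u)"
  have e: "((u,v) \<in> Ek adj x k) = (dd adj x u = k)" for k using a by (auto simp: Ek_def)
  have "psi adj x q t (u,v) = (\<Sum>k\<le>t. if dd adj x u = k then wk q t k else 0)"
    unfolding psi_def e ..
  also have "\<dots> = (if dd adj x u \<le> t then wk q t (dd adj x u) else 0)"
    by (subst sum.delta') auto
  also have "\<dots> = wk q t (dd adj x u)" using wk_big[of t "dd adj x u" q] by auto
  finally show ?thesis .
qed



locale sg =
  fixes adj :: "'n::finite \<Rightarrow> 'n \<Rightarrow> bool"
  assumes sg: "simple_graph adj"
begin

lemma adj_sym: "adj u v \<Longrightarrow> adj v u"
  using sg unfolding simple_graph_def by blast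

lemma adj_conn: "adj u v \<Longrightarrow> conn adj x u \<longleftrightarrow> conn adj x v"
  using adj_step[of adj u v x] adj_step[of adj v u x] adj_sym[of u v] by auto

lemma pt: assumes "adj u v"
  shows "(tf adj x q t u - tf adj x q t v)^2 \<le> psi adj x q t (u,v) + psi adj x q t (v,u)"
proof (cases "conn adj x u")
  case False
  then have "\<not> conn adj x v" using adj_conn[OF assms, of x] by simp
  then show ?thesis using False psi_nonneg[of adj x q t] by (simp add: tf_def add_nonneg_nonneg)
next
  case True
  have cv: "conn adj x v" using adj_conn[OF assms, of x] True by simp
  have l1: "dd adj x v \<le> Suc (dd adj x u)" using adj_step[OF assms True] by simp
  have l2: "dd adj x u \<le> Suc (dd adj x v)" using adj_step[OF adj_sym[OF assms] cv] by simp
  consider "dd adj x v = dd adj x u" | "dd adj x v = Suc (dd adj x u)" | "dd adj x u = Suc (dd adj x v)"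
    using l1 l2 by linarith
  then show ?thesis
  proof cases
    case 1 then show ?thesis using True cv psi_nonneg[of adj x q t] by (simp add: tf_def add_nonneg_nonneg)
  next
    case 2
    have "(tf adj x q t u - tf adj x q t v)^2 = psi adj x q t (u,v)"
      using psi_eval[OF assms True 2] True cv 2 by (simp add: tf_def wk_def)
    then show ?thesis using psi_nonneg[of adj x q t "(v,u)"] by linarith
  next
    case 3
    have "(tf adj x q t v - tf adj x q t u)^2 = psi adj x q t (v,u)"
      using psi_eval[OF adj_sym[OF assms] cv 3] True cv 3 by (simp add: tf_def wk_def)
    then show ?thesis using psi_nonneg[of adj x q t "(u,v)"] by (simp add: power2_commute)
  qed
qed

lemma energy_tf: "energy adj (\<chi> v. tf adj x q t v) \<le> (\<Sum>k\<le>t. wk q t k * real (card (Ek adj x k)))"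
proof -
  define S where "S = {(u,v). adj u v}"
  have "(\<Sum>(u,v)\<in>S. ((\<chi> v. tf adj x q t v) $ u - (\<chi> v. tf adj x q t v) $ v)\<^sup>2)
      \<le> (\<Sum>(u,v)\<in>S. psi adj x q t (u,v) + psi adj x q t (v,u))"
    by (intro sum_mono) (auto simp: S_def pt)
  also have "\<dots> = (\<Sum>p\<in>S. psi adj x q t p) + (\<Sum>p\<in>S. psi adj x q t (snd p, fst p))"
    by (simp add: sum.distrib case_prod_beta)
  also have "(\<Sum>p\<in>S. psi adj x q t (snd p, fst p)) = (\<Sum>p\<in>S. psi adj x q t p)"
    by (rule sum.reindex_bij_witness[of _ prod.swap prod.swap]) (auto simp: S_def adj_sym)
  also have "(\<Sum>p\<in>S. psi adj x q t p) = (\<Sum>k\<le>t. \<Sum>p\<in>S. if p \<in> Ek adj x k then wk q t k else 0)"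
    unfolding psi_def by (rule sum.swap)
  also have "\<dots> = (\<Sum>k\<le>t. wk q t k * real (card (Ek adj x k)))"
  proof (rule sum.cong)
    fix k
    have "Ek adj x k \<subseteq> S" by (auto simp: Ek_def S_def)
    then have "S \<inter> {p. p \<in> Ek adj x k} = Ek adj x k" by blast
    then show "(\<Sum>p\<in>S. if p \<in> Ek adj x k then wk q t k else 0) = wk q t k * real (card (Ek adj x k))"
      by (simp add: sum.If_cases)
  qed simp
  finally show ?thesis unfolding energy_def S_def by simp
qed

lemma card_Ek: "card (Ek adj x k) \<le> max_degree adj * (max_degree adj - 1)^k"
proof (induction k)
  case 0
  have "Ek adj x 0 \<subseteq> Pair x ` {v. adj x v}"
  proof
    fix p assume "p \<in> Ek adj x 0"
    then obtain u v where p: "p = (u,v)" "adj u v" "conn adj x u" "dd adj x u = 0"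
      unfolding Ek_def by blast
    then have "u = x" using dd_0[OF p(3) p(4)] by simp
    then show "p \<in> Pair x ` {v. adj x v}" using p by simp
  qed
  then have "card (Ek adj x 0) \<le> card (Pair x ` {v. adj x v})" by (intro card_mono) auto
  also have "\<dots> \<le> card {v. adj x v}" by (rule card_image_le) auto
  also have "\<dots> \<le> max_degree adj" using deg_le[of adj x] by (simp add: degree_def)
  finally show ?case by simp
next
  case (Suc k)
  define L where "L = {u. conn adj x u \<and> dd adj x u = Suc k}"
  define P where "P u = (SOME p. adj p u \<and> conn adj x p \<and> dd adj x p = k)" for u
  have P: "adj (P u) u \<and> conn adj x (P u) \<and> dd adj x (P u) = k" if "u \<in> L" for u
  proof -
    from that have c: "conn adj x u" and d: "dd adj x u = Suc k" by (simp_all add: L_def)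
    obtain p where "adj p u \<and> conn adj x p \<and> dd adj x p = k" using pred_ex[OF c d] by blast
    then show ?thesis unfolding P_def by (rule someI)
  qed
  have "Ek adj x (Suc k) \<subseteq> Sigma L (\<lambda>u. {v. adj u v} - {P u})"
  proof
    fix p assume "p \<in> Ek adj x (Suc k)"
    then obtain u v where p: "p = (u,v)" "adj u v" "conn adj x u"
       "dd adj x v = Suc (dd adj x u)" "dd adj x u = Suc k"
      unfolding Ek_def by blast
    have uL: "u \<in> L" using p(3,5) by (simp add: L_def)
    have "dd adj x (P u) = k" using P[OF uL] by simp
    then have "v \<noteq> P u" using p(4,5) by auto
    then show "p \<in> Sigma L (\<lambda>u. {v. adj u v} - {P u})" using p uL by simp
  qed
  then have "card (Ek adj x (Suc k)) \<le> card (Sigma L (\<lambda>u. {v. adj u v} - {P u}))"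
    by (intro card_mono) auto
  also have "\<dots> = (\<Sum>u\<in>L. card ({v. adj u v} - {P u}))" by (rule card_SigmaI) auto
  also have "\<dots> \<le> (\<Sum>u\<in>L. max_degree adj - 1)"
  proof (rule sum_mono)
    fix u assume "u \<in> L"
    then have "P u \<in> {v. adj u v}" using adj_sym[of "P u" u] P[of u] by simp
    then have "card ({v. adj u v} - {P u}) = degree adj u - 1"
      by (simp add: card_Diff_singleton degree_def)
    then show "card ({v. adj u v} - {P u}) \<le> max_degree adj - 1"
      using deg_le[of adj u] by linarith
  qed
  also have "\<dots> = card L * (max_degree adj - 1)" by simp
  also have "\<dots> \<le> card (Ek adj x k) * (max_degree adj - 1)"
  proof -
    have "L \<subseteq> snd ` Ek adj x k"
    proof
      fix u assume u: "u \<in> L"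
      have Pu: "adj (P u) u" "conn adj x (P u)" "dd adj x (P u) = k" using P[OF u] by simp_all
      have "dd adj x u = Suc k" using u by (simp add: L_def)
      then have "(P u, u) \<in> Ek adj x k" using Pu unfolding Ek_def by simp
      then show "u \<in> snd ` Ek adj x k" by force
    qed
    then have "card L \<le> card (snd ` Ek adj x k)" by (intro card_mono) auto
    also have "\<dots> \<le> card (Ek adj x k)" by (rule card_image_le) auto
    finally show ?thesis by simp
  qed
  also have "\<dots> \<le> max_degree adj * (max_degree adj - 1)^k * (max_degree adj - 1)"
    using Suc.IH by (rule mult_right_mono) (rule zero_le)
  also have "\<dots> = max_degree adj * (max_degree adj - 1)^(Suc k)"
    by (metis mult.assoc power_Suc2)
  finally show ?case .
qed





end



lemma tf_nz: "tf adj x q t v \<noteq> 0 \<Longrightarrow> walk adj x v (dd adj x v) \<and> dd adj x v \<le> t"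
  unfolding tf_def gfun_def by (cases "conn adj x v") (auto simp: walk_dd split: if_splits)

lemma tf_self: "tf adj x q t x = 1"
  unfolding tf_def gfun_def by (simp add: conn_self dd_self)

context sg begin

lemma sep_pt:
  assumes far: "\<And>m. walk adj x y m \<Longrightarrow> 2*t+2 \<le> m"
  shows "tf adj x q t v * tf adj y q t v = 0"
proof (rule ccontr)
  assume "tf adj x q t v * tf adj y q t v \<noteq> 0"
  then have a: "tf adj x q t v \<noteq> 0" and b: "tf adj y q t v \<noteq> 0" by auto
  from tf_nz[OF a] have wa: "walk adj x v (dd adj x v)" "dd adj x v \<le> t" by auto
  from tf_nz[OF b] have wb: "walk adj y v (dd adj y v)" "dd adj y v \<le> t" by auto
  have "walk adj v y (dd adj y v)" using walk_sym[OF sg wb(1)] .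
  then have "walk adj x y (dd adj x v + dd adj y v)" using walk_trans[OF wa(1)] by blast
  then have "2*t+2 \<le> dd adj x v + dd adj y v" by (rule far)
  then show False using wa(2) wb(2) by linarith
qed

lemma sep_edge0:
  assumes far: "\<And>m. walk adj x y m \<Longrightarrow> 2*t+2 \<le> m"
    and "adj w w'" "tf adj x q t w \<noteq> 0" "tf adj y q t w' \<noteq> 0"
  shows False
proof -
  from tf_nz[OF assms(3)] have wa: "walk adj x w (dd adj x w)" "dd adj x w \<le> t" by auto
  from tf_nz[OF assms(4)] have wb: "walk adj y w' (dd adj y w')" "dd adj y w' \<le> t" by auto
  have w1: "walk adj x w' (Suc (dd adj x w))" using wa(1) assms(2) by (auto simp: walk_Suc)
  have "walk adj w' y (dd adj y w')" using walk_sym[OF sg wb(1)] .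
  then have "walk adj x y (Suc (dd adj x w) + dd adj y w')" using walk_trans[OF w1] by blast
  then have "2*t+2 \<le> Suc (dd adj x w) + dd adj y w'" by (rule far)
  then show False using wa(2) wb(2) by linarith
qed

lemma sep_edge:
  assumes far: "\<And>m. walk adj x y m \<Longrightarrow> 2*t+2 \<le> m"
    and e: "adj u v"
  shows "(tf adj x q t u - tf adj x q t v) * (tf adj y q t u - tf adj y q t v) = 0"
proof (rule ccontr)
  assume "\<not> ?thesis"
  then have a: "tf adj x q t u \<noteq> 0 \<or> tf adj x q t v \<noteq> 0"
    and b: "tf adj y q t u \<noteq> 0 \<or> tf adj y q t v \<noteq> 0" by auto
  have p1: "tf adj x q t u * tf adj y q t u = 0" "tf adj x q t v * tf adj y q t v = 0"
    using sep_pt[OF far] by blast+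
  have n1: "tf adj x q t u = 0 \<or> tf adj y q t v = 0" using sep_edge0[OF far e] by blast
  have n2: "tf adj x q t v = 0 \<or> tf adj y q t u = 0" using sep_edge0[OF far adj_sym[OF e]] by blast
  show False using a b p1 n1 n2 by auto
qed

end

lemma energy_comb:
  fixes F G :: "real ^ 'n::finite"
  assumes cross: "\<And>u v. adj u v \<Longrightarrow> (F$u - F$v) * (G$u - G$v) = 0"
  shows "energy adj (a *\<^sub>R F + b *\<^sub>R G) = a\<^sup>2 * energy adj F + b\<^sup>2 * energy adj G"
proof -
  have sq: "(a*p + b*r)\<^sup>2 = a\<^sup>2*p\<^sup>2 + b\<^sup>2*r\<^sup>2 + 2*a*b*(p*r)" for p r :: real
    by (simp add: power2_eq_square algebra_simps)
  have "(\<Sum>(u,v)\<in>{(u,v). adj u v}. ((a *\<^sub>R F + b *\<^sub>R G) $ u - (a *\<^sub>R F + b *\<^sub>R G) $ v)\<^sup>2)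
     = (\<Sum>(u,v)\<in>{(u,v). adj u v}. a\<^sup>2 * (F$u - F$v)\<^sup>2 + b\<^sup>2 * (G$u - G$v)\<^sup>2)"
  proof (rule sum.cong)
    fix p assume "p \<in> {(u,v). adj u v}"
    then obtain u v where p: "p = (u,v)" "adj u v" by blast
    have "(a *\<^sub>R F + b *\<^sub>R G) $ u - (a *\<^sub>R F + b *\<^sub>R G) $ v = a*(F$u - F$v) + b*(G$u - G$v)"
      by (simp add: algebra_simps)
    then show "(case p of (u,v) \<Rightarrow> ((a *\<^sub>R F + b *\<^sub>R G) $ u - (a *\<^sub>R F + b *\<^sub>R G) $ v)\<^sup>2)
      = (case p of (u,v) \<Rightarrow> a\<^sup>2 * (F$u - F$v)\<^sup>2 + b\<^sup>2 * (G$u - G$v)\<^sup>2)"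
      using p sq[of "F$u - F$v" "G$u - G$v"] cross[OF p(2)] by simp
  qed simp
  also have "\<dots> = a\<^sup>2 * (\<Sum>(u,v)\<in>{(u,v). adj u v}. (F$u - F$v)\<^sup>2) + b\<^sup>2 * (\<Sum>(u,v)\<in>{(u,v). adj u v}. (G$u - G$v)\<^sup>2)"
    by (simp add: sum.distrib sum_distrib_left case_prod_beta)
  finally show ?thesis unfolding energy_def by simp
qed

lemma bsum_comb:
  fixes F G :: "real ^ 'n::finite"
  assumes "\<And>z. F$z * G$z = 0"
  shows "(\<Sum>z\<in>B. ((a *\<^sub>R F + b *\<^sub>R G) $ z)\<^sup>2) = a\<^sup>2 * (\<Sum>z\<in>B. (F$z)\<^sup>2) + b\<^sup>2 * (\<Sum>z\<in>B. (G$z)\<^sup>2)"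
proof -
  have "((a *\<^sub>R F + b *\<^sub>R G) $ z)\<^sup>2 = a\<^sup>2 * (F$z)\<^sup>2 + b\<^sup>2 * (G$z)\<^sup>2" for z
  proof -
    have "((a *\<^sub>R F + b *\<^sub>R G) $ z)\<^sup>2 = a\<^sup>2 * (F$z)\<^sup>2 + b\<^sup>2 * (G$z)\<^sup>2 + 2*a*b*(F$z * G$z)"
      by (simp add: power2_eq_square algebra_simps)
    then show ?thesis using assms[of z] by simp
  qed
  then show ?thesis by (simp add: sum.distrib sum_distrib_left)
qed

lemma geo_sum:
  fixes q r :: real
  assumes "q * r = 1"
  shows "(\<Sum>k<t. (q+1) * q^k * (r^k - r^Suc k)\<^sup>2) = (q+1)*(1-r)*(1-r^t)"
proof (induction t)
  case 0 then show ?case by simp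
next
  case (Suc t)
  have e: "q^t * r^t = 1" by (metis assms power_mult_distrib power_one)
  have "(r^t - r^Suc t)\<^sup>2 = r^t*r^t*(1-r)\<^sup>2" by (simp add: power2_eq_square algebra_simps)
  then have "(q+1) * q^t * (r^t - r^Suc t)\<^sup>2 = (q+1) * (q^t*r^t) * r^t * (1-r)\<^sup>2"
    by (simp add: mult_ac)
  also have "\<dots> = (q+1) * r^t * (1-r)\<^sup>2" by (simp add: e)
  finally have t: "(q+1) * q^t * (r^t - r^Suc t)\<^sup>2 = (q+1) * r^t * (1-r)\<^sup>2" .
  show ?case using Suc.IH t by (simp add: power2_eq_square algebra_simps)
qed

lemma sb_alt: "q > 0 \<Longrightarrow> steklov_bound q t = (q+1) * (1 - 1/q + (1/q)^(t+1))"
  unfolding steklov_bound_def by (simp add: field_simps power_one_over)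

lemma sum_w:
  fixes q :: real
  assumes q: "q > 0"
  shows "(\<Sum>k\<le>t. wk q t k * ((q+1) * q^k)) = steklov_bound q t"
proof -
  define r where "r = 1/q"
  have qr: "q * r = 1" using q by (simp add: r_def)
  have "(\<Sum>k\<le>t. wk q t k * ((q+1) * q^k)) = (\<Sum>k<t. wk q t k * ((q+1) * q^k)) + wk q t t * ((q+1) * q^t)"
    by (simp add: lessThan_Suc_atMost[symmetric])
  also have "(\<Sum>k<t. wk q t k * ((q+1) * q^k)) = (\<Sum>k<t. (q+1) * q^k * (r^k - r^Suc k)\<^sup>2)"
    by (rule sum.cong) (auto simp: wk_def gfun_def r_def)
  also have "\<dots> = (q+1)*(1-r)*(1-r^t)" by (rule geo_sum[OF qr])
  also have "wk q t t * ((q+1) * q^t) = (q+1) * r^t"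
  proof -
    have e: "q^t * r^t = 1" by (metis qr power_mult_distrib power_one)
    have "wk q t t * ((q+1) * q^t) = (q+1) * (q^t * r^t) * r^t"
      by (simp add: wk_def gfun_def r_def power2_eq_square)
    then show ?thesis using e by simp
  qed
  also have "(q+1)*(1-r)*(1-r^t) + (q+1) * r^t = (q+1) * (1 - r + r^(t+1))"
    by (simp add: algebra_simps)
  also have "\<dots> = steklov_bound q t" using sb_alt[OF q] by (simp add: r_def)
  finally show ?thesis .
qed

lemma sb_mono: "q > 1 \<Longrightarrow> s \<le> s' \<Longrightarrow> steklov_bound q s' \<le> steklov_bound q s"
proof -
  assume q: "q > 1" and s: "s \<le> s'"
  have "(1/q)^(s'+1) \<le> (1/q)^(s+1)"
    by (rule power_decreasing) (use q s in auto)
  then show ?thesis using q by (simp add: sb_alt)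
qed

lemma sb_eq: "q > 0 \<Longrightarrow> steklov_bound q t = q - (q^t - q - 1) / q^(t+1)"
  unfolding steklov_bound_def by (simp add: field_simps)



lemma (in sg) energy_bound:
  assumes d: "max_degree adj \<ge> 3" and q: "q = real (max_degree adj) - 1"
  shows "energy adj (\<chi> v. tf adj z q t v) \<le> steklov_bound q t"
proof -
  have "energy adj (\<chi> v. tf adj z q t v) \<le> (\<Sum>k\<le>t. wk q t k * real (card (Ek adj z k)))"
    by (rule energy_tf)
  also have "\<dots> \<le> (\<Sum>k\<le>t. wk q t k * ((q+1) * q^k))"
  proof (rule sum_mono)
    fix k
    have "real (card (Ek adj z k)) \<le> real (max_degree adj * (max_degree adj - 1)^k)"
      using card_Ek[of z k] by (simp only: of_nat_le_iff)
    also have "\<dots> = (q+1) * q^k" using d by (simp add: q of_nat_diff)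
    finally show "wk q t k * real (card (Ek adj z k)) \<le> wk q t k * ((q+1) * q^k)"
      by (rule mult_left_mono) (simp add: wk_def)
  qed
  also have "\<dots> = steklov_bound q t" by (rule sum_w) (use d q in simp)
  finally show ?thesis .
qed

theorem mainTheorem9:
  fixes adj :: "'n::finite \<Rightarrow> 'n \<Rightarrow> bool" and B :: "'n set" and t :: nat
  assumes "simple_graph adj"
    and "card B \<ge> 2"
    and "max_degree adj \<ge> 3"
    and "t \<ge> 1"
    and "boundary_diameter adj B \<ge> enat (2 * t + 2)"
  shows "sigma2 adj B \<le> ereal (steklov_bound (real (max_degree adj) - 1) t)
    \<and> steklov_bound (real (max_degree adj) - 1) t
        = (real (max_degree adj) - 1)
          - ((real (max_degree adj) - 1) ^ t - (real (max_degree adj) - 1) - 1)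
            / (real (max_degree adj) - 1) ^ (t + 1)
    \<and> (\<forall>s s'. 1 \<le> s \<longrightarrow> s \<le> s' \<longrightarrow>
          steklov_bound (real (max_degree adj) - 1) s'
            \<le> steklov_bound (real (max_degree adj) - 1) s)"
proof -
  interpret sg adj by unfold_locales (rule assms(1))
  define q where "q = real (max_degree adj) - 1"
  have q2: "q \<ge> 2" using assms(3) unfolding q_def by simp
  have P2: "steklov_bound q t = q - (q^t - q - 1)/q^(t+1)" by (rule sb_eq) (use q2 in simp)
  have P3: "\<forall>s s'. 1 \<le> s \<longrightarrow> s \<le> s' \<longrightarrow> steklov_bound q s' \<le> steklov_bound q s"
    using sb_mono[of q] q2 by auto
  have P1: "sigma2 adj B \<le> ereal (steklov_bound q t)"
  proof -
    let ?g = "\<lambda>p. gdist adj (fst p) (snd p)"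
    have fin: "finite (?g ` (B \<times> B))" by simp
    have ne: "B \<noteq> {}" using assms(2) by auto
    then have ne2: "?g ` (B \<times> B) \<noteq> {}" by simp
    have "boundary_diameter adj B = Max (?g ` (B \<times> B))"
      unfolding boundary_diameter_def using Max_Sup[OF fin ne2] by simp
    moreover have "Max (?g ` (B \<times> B)) \<in> ?g ` (B \<times> B)" by (rule Max_in[OF fin ne2])
    ultimately obtain x y where xy: "x \<in> B" "y \<in> B" "boundary_diameter adj B = gdist adj x y"
      by auto
    then have gd: "enat (2*t+2) \<le> gdist adj x y" using assms(5) by simp
    have far: "2*t+2 \<le> m" if w: "walk adj x y m" for m
    proof -
      have "gdist adj x y \<le> enat m" unfolding gdist_def by (rule INF_lower) (simp add: w)
      then have "enat (2*t+2) \<le> enat m" using gd by (rule order_trans[rotated])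
      then show ?thesis by simp
    qed
    define F :: "real^'n" where "F = (\<chi> v. tf adj x q t v)"
    define G :: "real^'n" where "G = (\<chi> v. tf adj y q t v)"
    have Fv: "F$v = tf adj x q t v" for v by (simp add: F_def)
    have Gv: "G$v = tf adj y q t v" for v by (simp add: G_def)
    have Fx: "F$x = 1" and Gy: "G$y = 1" by (simp_all add: Fv Gv tf_self)
    have Fy: "F$y = 0" using sep_pt[where x=x and y=y and t=t and q=q and v=y, OF far] by (simp add: Fv tf_self)
    have Gx: "G$x = 0" using sep_pt[where x=x and y=y and t=t and q=q and v=x, OF far] by (simp add: Gv tf_self)
    have cross: "(F$u - F$v) * (G$u - G$v) = 0" if "adj u v" for u v
      using sep_edge[where x=x and y=y and t=t and q=q, OF far that] by (simp add: Fv Gv)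
    have pw: "F$z * G$z = 0" for z using sep_pt[where x=x and y=y and t=t and q=q and v=z, OF far] by (simp add: Fv Gv)
    define C where "C = steklov_bound q t"
    have C0: "C \<ge> 0"
    proof -
      have "1/q \<le> 1" using q2 by simp
      then have "0 \<le> 1 - 1/q + (1/q)^(t+1)" using q2 by simp
      then show ?thesis unfolding C_def using q2 by (simp add: sb_alt)
    qed
    have EF: "energy adj F \<le> C" unfolding F_def C_def by (rule energy_bound[OF assms(3) q_def])
    have EG: "energy adj G \<le> C" unfolding G_def C_def by (rule energy_bound[OF assms(3) q_def])
    have SF: "1 \<le> (\<Sum>z\<in>B. (F$z)\<^sup>2)"
      using member_le_sum[of x B "\<lambda>z. (F$z)\<^sup>2"] xy(1) Fx by simp
    have SG: "1 \<le> (\<Sum>z\<in>B. (G$z)\<^sup>2)"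
      using member_le_sum[of y B "\<lambda>z. (G$z)\<^sup>2"] xy(2) Gy by simp
    define W where "W = span {F, G}"
    have sub: "subspace W" by (simp add: W_def subspace_span)
    have FG: "F \<noteq> G" using Fx Gx by auto
    have G0: "G \<noteq> 0" using Gy by auto
    have indG: "independent {G}"
      using independent_insertI[of G "{}"] G0 by (simp add: independent_empty)
    have FnG: "F \<notin> span {G}"
    proof
      assume "F \<in> span {G}"
      then obtain k where "F = k *\<^sub>R G" by (auto simp: span_singleton)
      then have "F$x = k * G$x" by simp
      then show False using Fx Gx by simp
    qed
    have ind: "independent {F, G}" by (rule independent_insertI[OF FnG indG])
    have dimW: "dim W = 2"
      using dim_span_eq_card_independent[OF ind] FG by (simp add: W_def)
    have "sigma2 adj B \<le> (SUP f\<in>W-{0}. rayleigh adj B f)"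
      unfolding sigma2_def by (rule INF_lower) (simp add: sub dimW)
    also have "\<dots> \<le> ereal C"
    proof (rule SUP_least)
      fix h assume h: "h \<in> W - {0}"
      then obtain a where "h - a *\<^sub>R F \<in> span {G}" by (auto simp: W_def span_insert)
      then obtain b where "h - a *\<^sub>R F = b *\<^sub>R G" by (auto simp: span_singleton)
      then have hab: "h = a *\<^sub>R F + b *\<^sub>R G" by (simp add: algebra_simps)
      have hx: "h$x = a" "h$y = b" by (simp_all add: hab Fx Gx Fy Gy)
      have ab: "a \<noteq> 0 \<or> b \<noteq> 0" using h hab by auto
      have nz: "\<not> (\<forall>z\<in>B. h$z = 0)" using xy hx ab by auto
      have E: "energy adj h = a\<^sup>2 * energy adj F + b\<^sup>2 * energy adj G"
        unfolding hab by (rule energy_comb) (rule cross)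
      have S: "(\<Sum>z\<in>B. (h$z)\<^sup>2) = a\<^sup>2 * (\<Sum>z\<in>B. (F$z)\<^sup>2) + b\<^sup>2 * (\<Sum>z\<in>B. (G$z)\<^sup>2)"
        unfolding hab by (rule bsum_comb) (rule pw)
      have a2: "a\<^sup>2 * energy adj F \<le> a\<^sup>2 * (C * (\<Sum>z\<in>B. (F$z)\<^sup>2))"
      proof (rule mult_left_mono)
        have "C * 1 \<le> C * (\<Sum>z\<in>B. (F$z)\<^sup>2)" by (rule mult_left_mono[OF SF C0])
        then show "energy adj F \<le> C * (\<Sum>z\<in>B. (F$z)\<^sup>2)" using EF by simp
      qed simp
      have b2: "b\<^sup>2 * energy adj G \<le> b\<^sup>2 * (C * (\<Sum>z\<in>B. (G$z)\<^sup>2))"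
      proof (rule mult_left_mono)
        have "C * 1 \<le> C * (\<Sum>z\<in>B. (G$z)\<^sup>2)" by (rule mult_left_mono[OF SG C0])
        then show "energy adj G \<le> C * (\<Sum>z\<in>B. (G$z)\<^sup>2)" using EG by simp
      qed simp
      have le: "energy adj h \<le> C * (\<Sum>z\<in>B. (h$z)\<^sup>2)"
        unfolding E S using a2 b2 by (simp add: algebra_simps)
      have pa: "a\<^sup>2 \<le> a\<^sup>2 * (\<Sum>z\<in>B. (F$z)\<^sup>2)" using mult_left_mono[OF SF, of "a\<^sup>2"] by simp
      have pb: "b\<^sup>2 \<le> b\<^sup>2 * (\<Sum>z\<in>B. (G$z)\<^sup>2)" using mult_left_mono[OF SG, of "b\<^sup>2"] by simp
      have "0 < a\<^sup>2 + b\<^sup>2" using ab by (auto simp: add_pos_nonneg add_nonneg_pos)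
      then have pos: "0 < (\<Sum>z\<in>B. (h$z)\<^sup>2)" unfolding S using pa pb by linarith
      have "energy adj h / (\<Sum>z\<in>B. (h$z)\<^sup>2) \<le> C" using le pos by (simp add: pos_divide_le_eq mult.commute)
      then show "rayleigh adj B h \<le> ereal C" unfolding rayleigh_def using nz by simp
    qed
    finally show ?thesis by (simp add: C_def)
  qed
  show ?thesis unfolding q_def[symmetric] using P1 P2 P3 by blast
qed


end
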